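(* Let $m\ge2$ be an integer and let $a,b,c,d$ be complex roots of unity. Then $$1-\frac{(a+b)(c+d)}{m}-\frac{abcd}{m^2}\neq0.$$ *)

theory Defs
  imports "HOL-Analysis.Analysis"
begin

end

theory Submission imports Defs "Jordan_Normal_Form.Char_Poly" begin

lemma circ_alg_int:
  fixes z :: complex and p :: "int poly"
  assumes zN: "z ^ N = 1" and N: "N > 0"
  shows "algebraic_int (poly (map_poly of_int p) z)"
proof -
  define x where "x = poly (map_poly of_int p) z"
  define A :: "int mat" where "A = mat N N (\<lambda>(i,j). \<Sum>k\<in>{k. k \<le> degree p \<and> (i+k) mod N = j}. coeff p k)"
  define Ac :: "complex mat" where "Ac = map_mat of_int A"
  define v :: "complex vec" where "v = vec N (\<lambda>i. z ^ i)"
  have A: "A \<in> carrier_mat N N" unfolding A_def by simp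
  have Ac: "Ac \<in> carrier_mat N N" unfolding Ac_def using A by simp
  have zmod: "z ^ (n mod N) = z ^ n" for n
  proof -
    have "z ^ n = z ^ (N * (n div N) + n mod N)" by simp
    also have "\<dots> = (z ^ N) ^ (n div N) * z ^ (n mod N)"
      by (simp only: power_add power_mult)
    finally have "z ^ n = (z ^ N) ^ (n div N) * z ^ (n mod N)" .
    thus ?thesis by (simp add: zN)
  qed
  have x_alt: "x = (\<Sum>k\<le>degree p. of_int (coeff p k) * z ^ k)"
    unfolding x_def by (simp add: poly_altdef degree_map_poly coeff_map_poly)
  have row: "(\<Sum>j<N. (\<Sum>k\<in>{k. k \<le> degree p \<and> (i+k) mod N = j}. of_int (coeff p k)) * z ^ j) = z ^ i * x"
    if "i < N" for i
  proof -
    have "(\<Sum>j<N. (\<Sum>k\<in>{k. k \<le> degree p \<and> (i+k) mod N = j}. of_int (coeff p k)) * z ^ j)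
       = (\<Sum>j<N. \<Sum>k\<le>degree p. if (i+k) mod N = j then of_int (coeff p k) * z ^ j else 0)"
      by (intro sum.cong refl) (auto simp: sum_distrib_right sum.If_cases Int_def intro!: sum.cong)
    also have "\<dots> = (\<Sum>k\<le>degree p. \<Sum>j<N. if (i+k) mod N = j then of_int (coeff p k) * z ^ j else 0)"
      by (rule sum.swap)
    also have "\<dots> = (\<Sum>k\<le>degree p. of_int (coeff p k) * z ^ ((i+k) mod N))"
      using N by (intro sum.cong refl) (simp add: sum.delta)
    also have "\<dots> = (\<Sum>k\<le>degree p. z ^ i * (of_int (coeff p k) * z ^ k))"
      by (intro sum.cong refl) (simp add: zmod power_add)
    also have "\<dots> = z ^ i * x" by (simp add: x_alt sum_distrib_left)
    finally show ?thesis .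
  qed
  have ev: "eigenvector Ac v x"
    unfolding eigenvector_def
  proof (intro conjI)
    show "v \<in> carrier_vec (dim_row Ac)" using Ac by (simp add: v_def)
    show "v \<noteq> 0\<^sub>v (dim_row Ac)"
    proof
      assume "v = 0\<^sub>v (dim_row Ac)"
      hence "v $ 0 = 0\<^sub>v N $ 0" using Ac by simp
      thus False using N by (simp add: v_def)
    qed
    show "Ac *\<^sub>v v = x \<cdot>\<^sub>v v"
    proof (rule eq_vecI)
      fix i assume "i < dim_vec (x \<cdot>\<^sub>v v)"
      hence i: "i < N" by (simp add: v_def)
      have "(Ac *\<^sub>v v) $ i = (\<Sum>j<N. Ac $$ (i,j) * v $ j)"
        using i Ac by (simp add: mult_mat_vec_def scalar_prod_def v_def lessThan_atLeast0)
      also have "\<dots> = (\<Sum>j<N. (\<Sum>k\<in>{k. k \<le> degree p \<and> (i+k) mod N = j}. of_int (coeff p k)) * z ^ j)"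
        using i by (intro sum.cong refl) (simp add: Ac_def A_def v_def)
      also have "\<dots> = z ^ i * x" using row[OF i] .
      finally show "(Ac *\<^sub>v v) $ i = (x \<cdot>\<^sub>v v) $ i" using i by (simp add: v_def mult.commute)
    qed (simp add: v_def Ac_def A_def)
  qed
  hence "eigenvalue Ac x" unfolding eigenvalue_def by blast
  hence "poly (char_poly Ac) x = 0" using eigenvalue_root_char_poly[OF Ac] by simp
  moreover have "char_poly Ac = map_poly of_int (char_poly A)"
    unfolding Ac_def by (rule of_int_hom.char_poly_hom[OF A])
  moreover have "lead_coeff (char_poly A) = 1" using degree_monic_char_poly[OF A] by simp
  ultimately show ?thesis unfolding x_def[symmetric] algebraic_int_altdef_ipoly by auto
qed

theorem lemma7p3:
  fixes m :: nat and a b c d :: complex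
  assumes "m \<ge> 2"
    and "\<exists>n>0. a ^ n = 1" and "\<exists>n>0. b ^ n = 1"
    and "\<exists>n>0. c ^ n = 1" and "\<exists>n>0. d ^ n = 1"
  shows "1 - (a + b) * (c + d) / of_nat m - a * b * c * d / (of_nat m)^2 \<noteq> 0"
proof
  assume H: "1 - (a + b) * (c + d) / of_nat m - a * b * c * d / (of_nat m)^2 = 0"
  define M :: complex where "M = of_nat m"
  have M0: "M \<noteq> 0" using assms(1) by (simp add: M_def)
  from assms(2-5) obtain na nb nc nd where n: "na > 0" "a ^ na = 1" "nb > 0" "b ^ nb = 1"
      "nc > 0" "c ^ nc = 1" "nd > 0" "d ^ nd = 1" by blast
  define N where "N = na * nb * nc * nd"
  have N: "N > 0" using n by (simp add: N_def)
  have pw: "x ^ N = 1" if "x ^ k = 1" "k dvd N" for x :: complex and k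
  proof -
    from that(2) obtain q where "N = k * q" by (auto elim: dvdE)
    thus ?thesis using that(1) by (simp add: power_mult)
  qed
  have aN: "a ^ N = 1" using pw[OF n(2)] by (simp add: N_def)
  have bN: "b ^ N = 1" using pw[OF n(4)] by (simp add: N_def)
  have cN: "c ^ N = 1" using pw[OF n(6)] by (simp add: N_def)
  have dN: "d ^ N = 1" using pw[OF n(8)] by (simp add: N_def)
  define \<zeta> where "\<zeta> = cis (2 * pi / real N)"
  have zN: "\<zeta> ^ N = 1" unfolding \<zeta>_def Complex.DeMoivre using N by simp
  have root: "\<exists>k. x = \<zeta> ^ k" if "x ^ N = 1" for x
  proof -
    have "x \<in> (\<lambda>k. cis (2 * pi * real k / real N)) ` {..<N}"
      using that Complex.bij_betw_roots_unity[OF N] unfolding bij_betw_def by simp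
    then obtain k where "x = cis (2 * pi * real k / real N)" by blast
    hence "x = \<zeta> ^ k" unfolding \<zeta>_def Complex.DeMoivre by (simp add: mult.commute)
    thus ?thesis by blast
  qed
  obtain ka kb kc kd where k: "a = \<zeta> ^ ka" "b = \<zeta> ^ kb" "c = \<zeta> ^ kc" "d = \<zeta> ^ kd"
    using root[OF aN] root[OF bN] root[OF cN] root[OF dN] by blast
  have eq: "a * b * c * d = M * (M - (a + b) * (c + d))"
  proof -
    have "1 - (a + b) * (c + d) / M - a * b * c * d / M^2 = (M^2 - M * (a + b) * (c + d) - a * b * c * d) / M^2"
      using M0 by (simp add: field_simps power2_eq_square)
    with H have "(M^2 - M * (a + b) * (c + d) - a * b * c * d) / M^2 = 0" by (simp add: M_def)
    hence "M^2 - M * (a + b) * (c + d) - a * b * c * d = 0" using M0 by simp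
    thus ?thesis by (simp add: algebra_simps power2_eq_square)
  qed
  have u: "(a * b * c * d) * (a * b * c * d) ^ (N - 1) = 1"
  proof -
    have "(a * b * c * d) * (a * b * c * d) ^ (N - 1) = (a * b * c * d) ^ N"
      using N by (simp add: power_Suc[symmetric])
    also have "\<dots> = 1" by (simp add: power_mult_distrib aN bN cN dN)
    finally show ?thesis .
  qed
  have inv: "1 / M = (M - (a + b) * (c + d)) * (a * b * c * d) ^ (N - 1)"
  proof -
    have "M * ((M - (a + b) * (c + d)) * (a * b * c * d) ^ (N - 1)) = (M * (M - (a + b) * (c + d))) * (a * b * c * d) ^ (N - 1)"
      by (simp only: mult.assoc)
    also have "\<dots> = (a * b * c * d) * (a * b * c * d) ^ (N - 1)" by (simp only: eq)
    also have "\<dots> = 1" by (rule u)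
    finally have "M * ((M - (a + b) * (c + d)) * (a * b * c * d) ^ (N - 1)) = 1" .
    thus ?thesis using M0 by (simp add: field_simps)
  qed
  define X :: "int poly" where "X = [:0, 1:]"
  define Q :: "int poly" where "Q = ([:int m:] - (X ^ ka + X ^ kb) * (X ^ kc + X ^ kd)) * (X ^ ka * X ^ kb * X ^ kc * X ^ kd) ^ (N - 1)"
  have "poly (map_poly of_int Q) \<zeta> = 1 / M"
    unfolding inv by (simp add: Q_def X_def k M_def hom_distribs)
  hence "algebraic_int (1 / M)" using circ_alg_int[OF zN N, of Q] by simp
  moreover have "1 / M = of_real (1 / real m)" by (simp add: M_def)
  ultimately have "algebraic_int (1 / real m)"
    by (metis algebraic_int_of_real_iff)
  moreover have "1 / real m \<in> \<rat>" by simp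
  ultimately have "1 / real m \<in> \<int>" using rational_algebraic_int_is_int by blast
  then obtain j :: int where j: "1 / real m = of_int j" by (auto elim: Ints_cases)
  have "0 < 1 / real m" "1 / real m < 1" using assms(1) by auto
  with j have "(0::real) < of_int j" "of_int j < (1::real)" by auto
  hence "0 < j" "j < 1" by simp_all
  thus False by simp
qed

end
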